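(* For every $n\in\mathbb N$ the Hall–Littlewood–Schubert series satisfies, as an identity of rational functions in $\mathbb{Q}(Y,\mathbf X)$, \[ \mathsf{HLS}_n(Y^{-1},\mathbf X^{-1})=(-1)^n\,Y^{-\binom{n}{2}}\,X_{[n]}\cdot \mathsf{HLS}_n(Y,\mathbf X), \] where $\mathbf X^{-1}=(X_C^{-1})_{\varnothing\neq C\subseteq[n]}$.
   Context: Let $n\in\mathbb N$ and $[n]=\{1,\dots,n\}$. $\mathrm{SSYT}_n$ denotes the set of semistandard Young tableaux with entries in $[n]$ (a Young diagram of a partition filled with entries weakly increasing along rows and strictly increasing down columns), including the empty tableau. $T_{ij}$ denotes the entry of $T$ in row $i$, column $j$. A tableau is identified with the sequence $(C_1,\dots,C_\ell)$ of its columns, where $C_j\subseteq[n]$ is the set of entries of column $j$; "$C\in T$" means $C$ is one of the columns of $T$ (products over $C\in T$ are taken over columns, with multiplicity). $T$ is reduced if its columns are pairwise distinct; $\mathrm{rSSYT}_n$ is the (finite) set of reduced tableaux. For $T=(C_1,\dots,C_\ell)$ and $i,j\in\mathbb N$ such that the cells $(i,j)$ and $(i,j+1)$ both exist, the leg set is $\mathrm{Leg}^+_T(i,j)=C_j\cap\{T_{ij},T_{ij}+1,\dots,T_{i,j+1}\}$ if $T_{i,j+1}\notin C_j$, and $\varnothing$ otherwise (and $\varnothing$ if one of the two cells does not exist). The leg polynomial is $\Phi_T(Y)=\prod_{(i,j):\,\mathrm{Leg}^+_T(i,j)\neq\varnothing}\bigl(1-Y^{\#\mathrm{Leg}^+_T(i,j)}\bigr)\in\mathbb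 Z[Y]$. With independent variables $Y$ and $\mathbf X=(X_C)_{\varnothing\neq C\subseteq[n]}$, the Hall–Littlewood–Schubert series is \[\mathsf{HLS}_n(Y,\mathbf X)=\sum_{T\in\mathrm{rSSYT}_n}\Phi_T(Y)\prod_{C\in T}\frac{X_C}{1-X_C}\in\mathbb Z[Y](\mathbf X).\] *)

theory Defs
  imports Main
begin

text \<open>A tableau is the list of its columns (C_1,...,C_l), each column a finite set of
entries. Rows and columns are 0-indexed here: entry T i j is the (i+1)-th smallest
element of column j, i.e. the paper's T_{i+1,j+1}.\<close>

definition entry :: "nat set list \<Rightarrow> nat \<Rightarrow> nat \<Rightarrow> nat" where
  "entry T i j = sorted_list_of_set (T ! j) ! i"

definition cell_exists :: "nat set list \<Rightarrow> nat \<Rightarrow> nat \<Rightarrow> bool" where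
  "cell_exists T i j \<longleftrightarrow> j < length T \<and> i < card (T ! j)"

definition is_ssyt :: "nat \<Rightarrow> nat set list \<Rightarrow> bool" where
  "is_ssyt n T \<longleftrightarrow>
     (\<forall>C\<in>set T. C \<noteq> {} \<and> C \<subseteq> {1..n}) \<and>
     (\<forall>j. Suc j < length T \<longrightarrow>
        card (T ! Suc j) \<le> card (T ! j) \<and>
        (\<forall>i < card (T ! Suc j). entry T i j \<le> entry T i (Suc j)))"

definition rSSYT :: "nat \<Rightarrow> nat set list set" where
  "rSSYT n = {T. is_ssyt n T \<and> distinct T}"

definition leg :: "nat set list \<Rightarrow> nat \<Rightarrow> nat \<Rightarrow> nat set" where
  "leg T i j =
     (if cell_exists T i j \<and> cell_exists T i (Suc j) \<and> entry T i (Suc j) \<notin> T ! j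
      then T ! j \<inter> {entry T i j .. entry T i (Suc j)} else {})"

definition leg_poly :: "nat set list \<Rightarrow> 'a::comm_ring_1 \<Rightarrow> 'a" where
  "leg_poly T y = (\<Prod>(i,j)\<in>{(i,j). cell_exists T i j \<and> leg T i j \<noteq> {}}.
                     1 - y ^ card (leg T i j))"

text \<open>Evaluation of HLS_n(Y,X) at Y = y, X_C = x C.\<close>

definition HLS :: "nat \<Rightarrow> 'a::field \<Rightarrow> (nat set \<Rightarrow> 'a) \<Rightarrow> 'a" where
  "HLS n y x = (\<Sum>T\<in>rSSYT n. leg_poly T y * prod_list (map (\<lambda>C. x C / (1 - x C)) T))"

end

theory Submission
  imports Defs
begin

abbreviation sl :: "nat set \<Rightarrow> nat list" where "sl A \<equiv> sorted_list_of_set A"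

definition ff :: "nat set \<Rightarrow> nat \<Rightarrow> nat" where "ff A k = card (A \<inter> {1..k})"

lemma sl_props:
  assumes "finite A"
  shows "sorted_wrt (<) (sl A)" "set (sl A) = A" "length (sl A) = card A" "distinct (sl A)" "sorted (sl A)"
  using assms by (auto simp: strict_sorted_list_of_set)

lemma sl_nth_in: "finite A \<Longrightarrow> i < card A \<Longrightarrow> sl A ! i \<in> A"
  by (metis nth_mem sl_props(2,3))

lemma sl_mono: "finite A \<Longrightarrow> i \<le> j \<Longrightarrow> j < card A \<Longrightarrow> sl A ! i \<le> sl A ! j"
  by (metis sl_props(3,5) sorted_nth_mono)

lemma sl_less: "finite A \<Longrightarrow> i < j \<Longrightarrow> j < card A \<Longrightarrow> sl A ! i < sl A ! j"
  by (metis sl_props(1,3) sorted_wrt_nth_less)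

lemma sl_less_iff: "finite A \<Longrightarrow> i < card A \<Longrightarrow> j < card A \<Longrightarrow> sl A ! i < sl A ! j \<longleftrightarrow> i < j"
  by (metis linorder_not_le sl_less sl_mono)

lemma sl_le_iff: "finite A \<Longrightarrow> i < card A \<Longrightarrow> j < card A \<Longrightarrow> sl A ! i \<le> sl A ! j \<longleftrightarrow> i \<le> j"
  by (metis linorder_not_le sl_less sl_mono)

lemma in_sl_nth: "finite A \<Longrightarrow> a \<in> A \<Longrightarrow> \<exists>j<card A. a = sl A ! j"
  by (metis in_set_conv_nth sl_props(2,3))

lemma count_lt_set:
  assumes "finite A" "i < card A"
  shows "{a\<in>A. a < sl A ! i} = (\<lambda>j. sl A ! j) ` {..<i}"
proof safe
  fix a assume a: "a \<in> A" "a < sl A ! i"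
  then obtain j where j: "j < card A" "a = sl A ! j" using in_sl_nth assms by blast
  then have "j < i" using sl_less_iff[OF assms(1) j(1) assms(2)] a by simp
  then show "a \<in> (\<lambda>j. sl A ! j) ` {..<i}" using j by auto
qed (use assms sl_nth_in sl_less in auto)

lemma count_lt:
  assumes "finite A" "i < card A"
  shows "card {a\<in>A. a < sl A ! i} = i"
proof -
  have "inj_on (\<lambda>j. sl A ! j) {..<i}"
    by (rule inj_onI) (metis assms(1,2) lessThan_iff nat_neq_iff order.strict_trans sl_less)
  then show ?thesis unfolding count_lt_set[OF assms] by (simp add: card_image)
qed

lemma count_le:
  assumes "finite A" "i < card A"
  shows "card {a\<in>A. a \<le> sl A ! i} = Suc i"
proof -
  have "{a\<in>A. a \<le> sl A ! i} = insert (sl A ! i) {a\<in>A. a < sl A ! i}"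
    using sl_nth_in[OF assms] by auto
  then show ?thesis using count_lt[OF assms] assms(1) by simp
qed

lemma ff_alt: "0 \<notin> A \<Longrightarrow> ff A k = card {a\<in>A. a \<le> k}"
  unfolding ff_def by (rule arg_cong[where f=card]) (auto, metis not_gr0 Suc_leI)

lemma ff_sl: "finite A \<Longrightarrow> 0 \<notin> A \<Longrightarrow> i < card A \<Longrightarrow> ff A (sl A ! i) = Suc i"
  by (simp add: ff_alt count_le)

lemma ff_mono: "k \<le> k' \<Longrightarrow> ff A k \<le> ff A k'"
  unfolding ff_def by (intro card_mono) auto

lemma ff_le: "ff A k \<le> k"
  unfolding ff_def by (metis card_atLeastAtMost card_mono diff_Suc_1 finite_atLeastAtMost inf_le2)

lemma ff_0[simp]: "ff A 0 = 0"
  unfolding ff_def by simp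

lemma ff_Suc: "ff A (Suc k) = ff A k + (if Suc k \<in> A then 1 else 0)"
proof -
  have e: "A \<inter> {1..Suc k} = (if Suc k \<in> A then insert (Suc k) (A \<inter> {1..k}) else A \<inter> {1..k})"
    by (auto simp: le_Suc_eq)
  show ?thesis unfolding ff_def e by auto
qed

lemma ff_cong: "(\<And>j. j \<le> k \<Longrightarrow> j \<in> A \<longleftrightarrow> j \<in> B) \<Longrightarrow> ff A k = ff B k"
  unfolding ff_def by (rule arg_cong[where f=card]) auto

lemma ff_full: "A \<subseteq> {1..n} \<Longrightarrow> n \<le> k \<Longrightarrow> ff A k = card A"
  unfolding ff_def by (rule arg_cong[where f=card]) auto

definition rel :: "nat set \<Rightarrow> nat set \<Rightarrow> bool" where
  "rel C D \<longleftrightarrow> card D \<le> card C \<and> (\<forall>i<card D. sl C ! i \<le> sl D ! i)"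

lemma rel_refl[simp]: "rel C C" unfolding rel_def by auto

lemma rel_trans: "rel C D \<Longrightarrow> rel D E \<Longrightarrow> rel C E"
  unfolding rel_def by (meson le_trans order.strict_trans2)

lemma rel_antisym:
  assumes "finite C" "finite D" "rel C D" "rel D C" shows "C = D"
proof -
  have c: "card C = card D" using assms(3,4) unfolding rel_def by simp
  have "sl C = sl D"
    by (rule nth_equalityI) (use assms c in \<open>auto simp: rel_def intro: order.antisym\<close>)
  then show ?thesis by (metis assms(1,2) sl_props(2))
qed

lemma ff_le_card: "finite A \<Longrightarrow> ff A k \<le> card A"
  unfolding ff_def by (simp add: card_mono)

lemma rel_dom:
  assumes fin: "finite C" "finite D" and z: "0 \<notin> C" "0 \<notin> D" and r: "rel C D"
  shows "ff D k \<le> ff C k"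
proof (cases "ff D k")
  case 0 then show ?thesis by simp
next
  case (Suc j)
  have jD: "j < card D" using ff_le_card[OF fin(2), of k] Suc by simp
  have dk: "sl D ! j \<le> k"
  proof (rule ccontr)
    assume "\<not> sl D ! j \<le> k"
    then have "{a\<in>D. a \<le> k} \<subseteq> {a\<in>D. a < sl D ! j}" by auto
    then have "card {a\<in>D. a \<le> k} \<le> j" using count_lt[OF fin(2) jD] card_mono fin(2)
      by (metis (no_types, lifting) finite_subset mem_Collect_eq subsetI)
    then show False using Suc ff_alt[OF z(2)] by simp
  qed
  have jC: "j < card C" using r jD unfolding rel_def by simp
  have "sl C ! j \<le> k" using r jD dk unfolding rel_def by force
  then have "ff C (sl C ! j) \<le> ff C k" by (rule ff_mono)
  then show ?thesis using ff_sl[OF fin(1) z(1) jC] Suc by simp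
qed

lemma dom_rel:
  assumes fin: "finite C" "finite D" and sub: "C \<subseteq> {1..n}" "D \<subseteq> {1..n}"
    and dom: "\<forall>k\<le>n. ff D k \<le> ff C k"
  shows "rel C D"
proof -
  have z: "0 \<notin> C" "0 \<notin> D" using sub by auto
  have "card D \<le> card C" using dom ff_full[OF sub(1), of n] ff_full[OF sub(2), of n] by auto
  moreover have "sl C ! i \<le> sl D ! i" if i: "i < card D" for i
  proof (rule ccontr)
    assume a: "\<not> sl C ! i \<le> sl D ! i"
    have iC: "i < card C" using i \<open>card D \<le> card C\<close> by simp
    have "sl D ! i \<in> D" using sl_nth_in[OF fin(2) i] .
    then have dn: "sl D ! i \<le> n" using sub by auto
    have "{a\<in>C. a \<le> sl D ! i} \<subseteq> {a\<in>C. a < sl C ! i}" using a by auto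
    then have "card {a\<in>C. a \<le> sl D ! i} \<le> i" using count_lt[OF fin(1) iC] card_mono fin(1)
      by (metis (no_types, lifting) finite_subset mem_Collect_eq subsetI)
    moreover have "ff D (sl D ! i) \<le> ff C (sl D ! i)" using dom dn by auto
    ultimately show False using ff_sl[OF fin(2) z(2) i] ff_alt[OF z(1)] by simp
  qed
  ultimately show ?thesis unfolding rel_def by auto
qed

lemma rel_iff:
  assumes "C \<subseteq> {1..n}" "D \<subseteq> {1..n}"
  shows "rel C D \<longleftrightarrow> (\<forall>k\<le>n. ff D k \<le> ff C k)"
proof -
  have f: "finite C" "finite D" using assms finite_subset by blast+
  have z: "0 \<notin> C" "0 \<notin> D" using assms by auto
  show ?thesis using rel_dom[OF f z] dom_rel[OF f assms] by blast
qed

definition wtp :: "nat \<Rightarrow> 'a::comm_ring_1 \<Rightarrow> nat set \<Rightarrow> nat set \<Rightarrow> 'a" where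
  "wtp m z A B = (\<Prod>k\<in>{k\<in>{1..m}. k \<in> B \<and> k \<notin> A}. 1 - z ^ (ff A k + 1 - ff B k))"

lemma leg_path:
  assumes sub: "C \<subseteq> {1..n}" "D \<subseteq> {1..n}" and r: "rel C D"
  shows "leg_poly [C,D] y = wtp n y C D"
proof -
  have fin: "finite C" "finite D" using sub finite_subset by blast+
  have z: "0 \<notin> C" "0 \<notin> D" using sub by auto
  have cd: "card D \<le> card C" using r by (simp add: rel_def)
  define J where "J = {i. i < card D \<and> sl D ! i \<notin> C}"
  have I: "{(i,j). cell_exists [C,D] i j \<and> leg [C,D] i j \<noteq> {}} = (\<lambda>i. (i,0)) ` J"
  proof -
    have key: "(cell_exists [C,D] i j \<and> leg [C,D] i j \<noteq> {}) \<longleftrightarrow> (i,j) \<in> (\<lambda>i. (i,0)) ` J" for i j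
    proof
      assume a: "cell_exists [C, D] i j \<and> leg [C, D] i j \<noteq> {}"
      then have c1: "cell_exists [C,D] i (Suc j)" and ne: "entry [C,D] i (Suc j) \<notin> [C,D] ! j"
        unfolding leg_def by (auto split: if_splits)
      then have j0: "j = 0" unfolding cell_exists_def by simp
      show "(i, j) \<in> (\<lambda>i. (i, 0)) ` J" using c1 ne j0 unfolding J_def cell_exists_def entry_def by auto
    next
      assume "(i,j) \<in> (\<lambda>i. (i,0)) ` J"
      then have i: "i \<in> J" and j0: "j = 0" by auto
      then have iD: "i < card D" and nC: "sl D ! i \<notin> C" by (auto simp: J_def)
      have iC: "i < card C" using iD cd by simp
      have le: "sl C ! i \<le> sl D ! i" using r iD by (simp add: rel_def)
      have "sl C ! i \<in> leg [C,D] i 0"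
        unfolding leg_def using iC iD nC le sl_nth_in[OF fin(1) iC]
        by (simp add: cell_exists_def entry_def)
      then show "cell_exists [C,D] i j \<and> leg [C,D] i j \<noteq> {}" using iC j0 by (auto simp: cell_exists_def)
    qed
    show ?thesis
    proof (rule set_eqI)
      fix p :: "nat \<times> nat" show "p \<in> {(i,j). cell_exists [C,D] i j \<and> leg [C,D] i j \<noteq> {}} \<longleftrightarrow> p \<in> (\<lambda>i. (i,0)) ` J"
        using key[of "fst p" "snd p"] by (cases p) simp
    qed
  qed
  have legJ: "card (leg [C,D] i 0) = ff C (sl D ! i) + 1 - ff D (sl D ! i)" if i: "i \<in> J" for i
  proof -
    have iD: "i < card D" and nC: "sl D ! i \<notin> C" using i by (auto simp: J_def)
    have iC: "i < card C" using iD cd by simp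
    have le: "sl C ! i \<le> sl D ! i" using r iD by (simp add: rel_def)
    have l: "leg [C,D] i 0 = C \<inter> {sl C ! i .. sl D ! i}"
      unfolding leg_def using iC iD nC by (simp add: cell_exists_def entry_def)
    have e: "C \<inter> {sl C ! i .. sl D ! i} = {a\<in>C. a \<le> sl D ! i} - {a\<in>C. a < sl C ! i}" by auto
    have s: "{a\<in>C. a < sl C ! i} \<subseteq> {a\<in>C. a \<le> sl D ! i}" using le by auto
    have "card (leg [C,D] i 0) = card {a\<in>C. a \<le> sl D ! i} - i"
      unfolding l e using card_Diff_subset[OF _ s] fin(1) count_lt[OF fin(1) iC] by simp
    then show ?thesis using ff_alt[OF z(1)] ff_sl[OF fin(2) z(2) iD] by simp
  qed
  have bij: "bij_betw (\<lambda>i. sl D ! i) J {k\<in>{1..n}. k \<in> D \<and> k \<notin> C}"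
  proof (rule bij_betw_imageI)
    show "inj_on (\<lambda>i. sl D ! i) J"
      by (rule inj_onI) (metis J_def fin(2) mem_Collect_eq nat_neq_iff sl_less)
    show "(\<lambda>i. sl D ! i) ` J = {k\<in>{1..n}. k \<in> D \<and> k \<notin> C}"
    proof safe
      fix i assume "i \<in> J"
      then show "sl D ! i \<in> {1..n}" "sl D ! i \<in> D" "sl D ! i \<in> C \<Longrightarrow> False"
        using sl_nth_in[OF fin(2)] sub by (auto simp: J_def subset_iff)
    next
      fix k assume "k \<in> {1..n}" "k \<in> D" "k \<notin> C"
      then show "k \<in> (\<lambda>i. sl D ! i) ` J" using in_sl_nth[OF fin(2)] by (force simp: J_def)
    qed
  qed
  have "leg_poly [C,D] y = (\<Prod>i\<in>J. 1 - y ^ card (leg [C,D] i 0))"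
    unfolding leg_poly_def I by (subst prod.reindex) (auto intro: inj_onI)
  also have "\<dots> = (\<Prod>i\<in>J. 1 - y ^ (ff C (sl D ! i) + 1 - ff D (sl D ! i)))"
    by (rule prod.cong) (auto simp: legJ)
  also have "\<dots> = wtp n y C D"
    unfolding wtp_def by (rule prod.reindex_bij_betw[OF bij])
  finally show ?thesis .
qed

definition rho :: "nat \<Rightarrow> nat set \<Rightarrow> nat" where "rho m E = (\<Sum>k<m. k - ff E k)"

definition cond :: "nat \<Rightarrow> nat set \<Rightarrow> nat set \<Rightarrow> nat set \<Rightarrow> bool" where
  "cond m C D E \<longleftrightarrow> (\<forall>k\<le>m. ff E k \<le> ff C k \<and> ff D k \<le> ff E k)"

definition trm :: "nat \<Rightarrow> 'a::field \<Rightarrow> nat set \<Rightarrow> nat set \<Rightarrow> nat set \<Rightarrow> 'a" where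
  "trm m y C D E = (-1)^card E * y^rho m E * wtp m (inverse y) C E * wtp m y E D"

definition stp :: "'a::field \<Rightarrow> nat set \<Rightarrow> nat set \<Rightarrow> nat \<Rightarrow> 'a" where
  "stp y C D k = (if k \<in> C \<and> k \<notin> D then 0
     else if k \<notin> C \<and> k \<in> D then 1 - y^(ff C (k-1) - ff D (k-1))
     else if k \<in> C \<and> k \<in> D then y^(ff C (k-1) - ff D (k-1)) else 1)"

definition Zs :: "nat \<Rightarrow> 'a::field \<Rightarrow> nat set \<Rightarrow> nat set \<Rightarrow> 'a" where
  "Zs m y C D = (\<Sum>E\<in>Pow {1..m}. if cond m C D E then trm m y C D E else 0)"

lemma wtp_Suc: "wtp (Suc m) z A B = wtp m z A B *
   (if Suc m \<in> B \<and> Suc m \<notin> A then 1 - z^(ff A (Suc m) + 1 - ff B (Suc m)) else 1)"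
proof -
  have e: "{k\<in>{1..Suc m}. k \<in> B \<and> k \<notin> A} = (if Suc m \<in> B \<and> Suc m \<notin> A
     then insert (Suc m) {k\<in>{1..m}. k \<in> B \<and> k \<notin> A} else {k\<in>{1..m}. k \<in> B \<and> k \<notin> A})"
    by (auto simp: le_Suc_eq)
  show ?thesis unfolding wtp_def e by (simp add: mult.commute)
qed

lemma wtp_cong:
  assumes "\<And>k. k \<le> m \<Longrightarrow> (k \<in> A \<longleftrightarrow> k \<in> A') \<and> (k \<in> B \<longleftrightarrow> k \<in> B')"
  shows "wtp m z A B = wtp m z A' B'"
proof -
  have s: "{k\<in>{1..m}. k \<in> B \<and> k \<notin> A} = {k\<in>{1..m}. k \<in> B' \<and> k \<notin> A'}" using assms by auto
  show ?thesis unfolding wtp_def s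
    by (rule prod.cong[OF refl]) (metis (no_types, lifting) assms ff_cong atLeastAtMost_iff mem_Collect_eq order_trans)
qed

lemma rho_Suc: "rho (Suc m) E = rho m E + (m - ff E m)"
  by (simp add: rho_def)

lemma rho_cong: "(\<And>k. k < m \<Longrightarrow> k \<in> A \<longleftrightarrow> k \<in> B) \<Longrightarrow> rho m A = rho m B"
  unfolding rho_def by (rule sum.cong[OF refl]) (metis ff_cong lessThan_iff order_le_less_trans)

lemma pow_inv_cancel: "(y::'a::field) \<noteq> 0 \<Longrightarrow> y^(l+j) * inverse y ^ j = y^l"
  by (simp add: power_add power_inverse field_simps)

lemma step_one:
  fixes y :: "'a::field"
  assumes y: "y \<noteq> 0" and E: "E \<subseteq> {1..m}" and c: "cond m C D E"
  shows "(if cond (Suc m) C D E then trm (Suc m) y C D E else 0)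
       + (if cond (Suc m) C D (insert (Suc m) E) then trm (Suc m) y C D (insert (Suc m) E) else 0)
       = trm m y C D E * ((-1)^(if Suc m \<in> C then 1 else 0) * y^(m - ff C m) * stp y C D (Suc m))"
proof -
  let ?M = "Suc m" let ?I = "insert (Suc m) E"
  define a where "a = ff C m" define b where "b = ff D m" define e where "e = ff E m"
  have finE: "finite E" using E finite_subset by blast
  have ME: "?M \<notin> E" using E by auto
  have ba: "b \<le> e" "e \<le> a" using c by (auto simp: cond_def a_def b_def e_def)
  have am: "a \<le> m" unfolding a_def by (rule ff_le)
  have fE: "ff E ?M = e" using ME by (simp add: ff_Suc e_def)
  have fI: "ff ?I ?M = Suc e"
    by (simp add: ff_Suc e_def) (rule ff_cong, auto)
  have fIk: "ff ?I k = ff E k" if "k \<le> m" for k using that by (intro ff_cong) auto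
  have fC: "ff C ?M = a + (if ?M \<in> C then 1 else 0)" by (simp add: ff_Suc a_def)
  have fD: "ff D ?M = b + (if ?M \<in> D then 1 else 0)" by (simp add: ff_Suc b_def)
  have cE: "cond ?M C D E \<longleftrightarrow> e \<le> ff C ?M \<and> ff D ?M \<le> e"
    using c fE unfolding cond_def by (auto simp: le_Suc_eq)
  have cI: "cond ?M C D ?I \<longleftrightarrow> Suc e \<le> ff C ?M \<and> ff D ?M \<le> Suc e"
    using c fI fIk unfolding cond_def by (auto simp: le_Suc_eq)
  have tE: "trm ?M y C D E = trm m y C D E * y^(m-e) * (if ?M \<in> D then 1 - y^(e + 1 - ff D ?M) else 1)"
    unfolding trm_def wtp_Suc rho_Suc using ME fE by (simp add: e_def power_add)
  have wI1: "wtp m (inverse y) C ?I = wtp m (inverse y) C E" by (rule wtp_cong) auto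
  have wI2: "wtp m y ?I D = wtp m y E D" by (rule wtp_cong) auto
  have rI: "rho m ?I = rho m E" by (rule rho_cong) auto
  have cardI: "card ?I = Suc (card E)" using finE ME by simp
  have tI: "trm ?M y C D ?I = - (trm m y C D E * y^(m-e) * (if ?M \<notin> C then 1 - inverse y^(ff C ?M + 1 - Suc e) else 1))"
    unfolding trm_def wtp_Suc rho_Suc using fI fIk[of m] wI1 wI2 rI cardI
    by (simp add: e_def power_add)
  obtain i where i: "e = b + i" using ba by (metis le_add_diff_inverse)
  obtain j where j: "a = e + j" using ba by (metis le_add_diff_inverse)
  obtain l where l: "m = a + l" using am by (metis le_add_diff_inverse)
  have me: "m - e = l + j" "m - a = l" using i j l by auto
  have stpM: "stp y C D ?M = (if ?M \<in> C \<and> ?M \<notin> D then 0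
     else if ?M \<notin> C \<and> ?M \<in> D then 1 - y^(i+j)
     else if ?M \<in> C \<and> ?M \<in> D then y^(i+j) else 1)"
    unfolding stp_def using i j by (simp add: a_def b_def)
  define T where "T = trm m y C D E"
  have TT: "trm m y C D E = T" by (simp add: T_def)
  have ma: "m - ff C m = l" using me a_def by simp
  show ?thesis
  proof (cases "?M \<in> C"; cases "?M \<in> D")
    assume "?M \<in> C" "?M \<in> D"
    then show ?thesis unfolding cE cI tE tI stpM fC fD me ma TT using i j
      by (cases i) (auto simp: power_add algebra_simps)
  next
    assume "?M \<in> C" "?M \<notin> D"
    then show ?thesis unfolding cE cI tE tI stpM fC fD me ma TT using i j by auto
  next
    assume "?M \<notin> C" "?M \<in> D"
    then show ?thesis unfolding cE cI tE tI stpM fC fD me ma TT using i j pow_inv_cancel[OF y, of l j]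
      by (cases i; cases j) (auto simp: power_add algebra_simps)
  next
    assume "?M \<notin> C" "?M \<notin> D"
    then show ?thesis unfolding cE cI tE tI stpM fC fD me ma TT using i j pow_inv_cancel[OF y, of l j]
      by (cases j) (auto simp: power_add algebra_simps)
  qed
qed

lemma cond_Suc_down:
  assumes "cond (Suc m) C D X" "\<And>k. k \<le> m \<Longrightarrow> k \<in> X \<longleftrightarrow> k \<in> E"
  shows "cond m C D E"
proof -
  have eq: "ff X k = ff E k" if "k \<le> m" for k using assms(2) that by (intro ff_cong) auto
  show ?thesis unfolding cond_def
  proof (intro allI impI)
    fix k assume k: "k \<le> m"
    then have "k \<le> Suc m" by simp
    then show "ff E k \<le> ff C k \<and> ff D k \<le> ff E k" using assms(1) eq[OF k] unfolding cond_def by metis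
  qed
qed

lemma Zs_formula:
  fixes y :: "'a::field"
  assumes y: "y \<noteq> 0"
  shows "Zs m y C D = (-1)^(ff C m) * y^(rho m C) * (\<Prod>k\<in>{1..m}. stp y C D k)"
proof (induction m)
  case 0
  show ?case by (simp add: Zs_def cond_def trm_def rho_def wtp_def)
next
  case (Suc m)
  define g where "g E = (if cond (Suc m) C D E then trm (Suc m) y C D E else 0)" for E
  define K where "K = ((-1::'a)^(if Suc m \<in> C then 1 else 0) * y^(m - ff C m) * stp y C D (Suc m))"
  have P: "Pow {1..Suc m} = Pow {1..m} \<union> insert (Suc m) ` Pow {1..m}"
    by (simp add: atLeastAtMostSuc_conv Pow_insert)
  have disj: "Pow {1..m} \<inter> insert (Suc m) ` Pow {1..m} = {}" by auto
  have inj: "inj_on (insert (Suc m)) (Pow {1..m})"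
    by (rule inj_onI) (metis Pow_iff atLeastAtMost_iff insert_ident not_less_eq_eq order_refl subset_iff)
  have "Zs (Suc m) y C D = (\<Sum>E\<in>Pow {1..m}. g E) + (\<Sum>E\<in>insert (Suc m) ` Pow {1..m}. g E)"
    unfolding Zs_def g_def[symmetric] P by (rule sum.union_disjoint) (auto simp: disj)
  also have "\<dots> = (\<Sum>E\<in>Pow {1..m}. g E) + (\<Sum>E\<in>Pow {1..m}. g (insert (Suc m) E))"
    by (simp only: sum.reindex[OF inj] comp_def)
  also have "\<dots> = (\<Sum>E\<in>Pow {1..m}. g E + g (insert (Suc m) E))"
    by (simp only: sum.distrib)
  also have "\<dots> = (\<Sum>E\<in>Pow {1..m}. (if cond m C D E then trm m y C D E else 0) * K)"
  proof (rule sum.cong[OF refl])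
    fix E assume E: "E \<in> Pow {1..m}"
    show "g E + g (insert (Suc m) E) = (if cond m C D E then trm m y C D E else 0) * K"
    proof (cases "cond m C D E")
      case True
      then show ?thesis using step_one[OF y _ True] E unfolding g_def K_def by simp
    next
      case False
      have "\<not> cond (Suc m) C D E" using False cond_Suc_down by blast
      moreover have "\<not> cond (Suc m) C D (insert (Suc m) E)" using False cond_Suc_down[of m C D "insert (Suc m) E" E] by auto
      ultimately show ?thesis using False unfolding g_def by simp
    qed
  qed
  also have "\<dots> = Zs m y C D * K" unfolding Zs_def by (simp add: sum_distrib_right)
  also have "\<dots> = (-1)^(ff C (Suc m)) * y^(rho (Suc m) C) * (\<Prod>k\<in>{1..Suc m}. stp y C D k)"
  proof -
    have e1: "(-1::'a)^(ff C (Suc m)) = (-1)^(ff C m) * (-1)^(if Suc m \<in> C then 1 else 0)"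
      by (simp add: ff_Suc power_add)
    have e2: "y^rho (Suc m) C = y^rho m C * y^(m - ff C m)" by (simp add: rho_Suc power_add)
    have e3: "(\<Prod>k\<in>{1..Suc m}. stp y C D k) = (\<Prod>k\<in>{1..m}. stp y C D k) * stp y C D (Suc m)"
      by (subst prod.nat_ivl_Suc') (auto simp: mult.commute)
    show ?thesis unfolding Suc K_def e1 e2 e3 by (simp only: mult_ac)
  qed
  finally show ?case .
qed

lemma ff_eq_imp_eq:
  assumes sub: "C \<subseteq> {1..n}" "D \<subseteq> {1..n}" and eq: "\<forall>k\<le>n. ff C k = ff D k"
  shows "C = D"
proof -
  have "k \<in> C \<longleftrightarrow> k \<in> D" if k: "k \<in> {1..n}" for k
  proof -
    obtain k' where kk: "k = Suc k'" using k by (cases k) auto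
    have "Suc k' \<le> n" using k kk by simp
    then have "ff C (Suc k') = ff D (Suc k')" "ff C k' = ff D k'" using eq by auto
    then show ?thesis unfolding kk ff_Suc by (auto split: if_splits)
  qed
  then show ?thesis using sub by blast
qed

lemma Zs_zero:
  fixes y :: "'a::field"
  assumes y: "y \<noteq> 0" and sub: "C \<subseteq> {1..n}" "D \<subseteq> {1..n}"
    and dom: "\<forall>k\<le>n. ff D k \<le> ff C k" and ne: "C \<noteq> D"
  shows "Zs n y C D = 0"
proof -
  obtain k0 where k0: "k0 \<le> n" "ff C k0 \<noteq> ff D k0" using ff_eq_imp_eq[OF sub] ne by blast
  define k where "k = (LEAST k. ff C k \<noteq> ff D k)"
  have k1: "ff C k \<noteq> ff D k" unfolding k_def by (rule LeastI[of _ k0]) (rule k0(2))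
  have k2: "k \<le> k0" unfolding k_def by (rule Least_le) (rule k0(2))
  have "k \<noteq> 0" using k1 by (metis ff_0)
  then obtain k' where kk: "k = Suc k'" by (metis not0_implies_Suc)
  have "k' < k" using kk by simp
  then have prev: "ff C k' = ff D k'"
    using not_less_Least[of k' "\<lambda>k. ff C k \<noteq> ff D k"] unfolding k_def by blast
  have "ff D k \<le> ff C k" using dom k2 k0 by auto
  then have "k \<in> C \<and> k \<notin> D" using k1 prev unfolding kk ff_Suc by (auto split: if_splits)
  then have "stp y C D k = 0" by (simp add: stp_def)
  moreover have "k \<in> {1..n}" using kk k2 k0 by auto
  ultimately have "(\<Prod>k\<in>{1..n}. stp y C D k) = 0"
    using prod_zero_iff[of "{1..n}" "stp y C D"] by auto
  then show ?thesis by (simp add: Zs_formula[OF y])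
qed

lemma all_nat_split: "(\<forall>j::nat. P j) \<longleftrightarrow> P 0 \<and> (\<forall>j. P (Suc j))"
  by (metis not0_implies_Suc)

lemma entry_Cons_Suc[simp]: "entry (C#T) i (Suc j) = entry T i j"
  by (simp add: entry_def)

lemma cell_Cons_Suc[simp]: "cell_exists (C#T) i (Suc j) = cell_exists T i j"
  by (simp add: cell_exists_def)

lemma leg_Cons_Suc[simp]: "leg (C#T) i (Suc j) = leg T i j"
  by (simp add: leg_def)

lemma ssyt_Nil[simp]: "is_ssyt n []"
  by (simp add: is_ssyt_def)

lemma ssyt_single: "is_ssyt n [C] \<longleftrightarrow> C \<noteq> {} \<and> C \<subseteq> {1..n}"
  by (simp add: is_ssyt_def)

lemma ssyt_cons2: "is_ssyt n (C#D#L) \<longleftrightarrow> (C \<noteq> {} \<and> C \<subseteq> {1..n}) \<and> rel C D \<and> is_ssyt n (D#L)"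
proof -
  have e0: "entry (C#D#L) i 0 = sl C ! i" "entry (C#D#L) i (Suc 0) = sl D ! i" for i
    by (simp_all add: entry_def)
  show ?thesis
    unfolding is_ssyt_def
    apply (subst all_nat_split)
    apply (simp add: e0 rel_def entry_def)
    apply (rule iffI; elim conjE; intro conjI; assumption)
    done
qed

lemma ssyt_rel_chain:
  assumes "is_ssyt n (D#L)" "E \<in> set L" shows "rel D E"
  using assms
proof (induction L arbitrary: D)
  case Nil then show ?case by simp
next
  case (Cons F L)
  have "rel D F" "is_ssyt n (F#L)" using Cons.prems(1) ssyt_cons2 by auto
  then show ?case using Cons rel_trans by (cases "E = F") auto
qed

lemma ssyt_sets: "is_ssyt n T \<Longrightarrow> C \<in> set T \<Longrightarrow> C \<noteq> {} \<and> C \<subseteq> {1..n}"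
  by (simp add: is_ssyt_def)

lemma rSSYT_cons2:
  "C#D#L \<in> rSSYT n \<longleftrightarrow> (C \<noteq> {} \<and> C \<subseteq> {1..n}) \<and> rel C D \<and> C \<noteq> D \<and> D#L \<in> rSSYT n"
proof
  assume a: "C#D#L \<in> rSSYT n"
  then show "(C \<noteq> {} \<and> C \<subseteq> {1..n}) \<and> rel C D \<and> C \<noteq> D \<and> D#L \<in> rSSYT n"
    by (auto simp: rSSYT_def ssyt_cons2)
next
  assume a: "(C \<noteq> {} \<and> C \<subseteq> {1..n}) \<and> rel C D \<and> C \<noteq> D \<and> D#L \<in> rSSYT n"
  have sD: "is_ssyt n (D#L)" "distinct (D#L)" using a by (auto simp: rSSYT_def)
  have fin: "finite C" "finite D" using a ssyt_sets[OF sD(1), of D] finite_subset by auto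
  have "C \<notin> set L"
  proof
    assume "C \<in> set L"
    then have "rel D C" using ssyt_rel_chain[OF sD(1)] by blast
    then show False using a rel_antisym[OF fin] by blast
  qed
  then show "C#D#L \<in> rSSYT n" using a sD by (auto simp: rSSYT_def ssyt_cons2)
qed

lemma rSSYT_single: "[C] \<in> rSSYT n \<longleftrightarrow> C \<noteq> {} \<and> C \<subseteq> {1..n}"
  by (simp add: rSSYT_def ssyt_single)

lemma rSSYT_Nil: "[] \<in> rSSYT n"
  by (simp add: rSSYT_def)

lemma finite_rSSYT: "finite (rSSYT n)"
proof -
  have "rSSYT n \<subseteq> {xs. set xs \<subseteq> Pow {1..n} \<and> length xs \<le> card (Pow {1..n})}"
  proof safe
    fix T assume T: "T \<in> rSSYT n"
    then show "\<And>C x. C \<in> set T \<Longrightarrow> x \<in> C \<Longrightarrow> x \<in> {1..n}" unfolding rSSYT_def is_ssyt_def by blast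
    have "set T \<subseteq> Pow {1..n}" using T by (auto simp: rSSYT_def is_ssyt_def)
    then have "card (set T) \<le> card (Pow {1..n})" by (simp add: card_mono)
    then show "length T \<le> card (Pow {1..n})" using T by (simp add: rSSYT_def distinct_card)
  qed
  then show ?thesis by (rule finite_subset) (simp add: finite_lists_length_le)
qed

lemma sum_cons_split:
  fixes g :: "nat set list \<Rightarrow> 'a::comm_monoid_add"
  assumes fin: "finite R" and finN: "finite N" and hd: "\<And>C L. C#L \<in> R \<Longrightarrow> C \<in> N"
  shows "(\<Sum>T\<in>R. g T) = (if [] \<in> R then g [] else 0) + (\<Sum>C\<in>N. \<Sum>L\<in>Cons C -` R. g (C#L))"
proof -
  have split: "R = (R \<inter> {[]}) \<union> (R - {[]})" by auto
  have "(\<Sum>T\<in>R. g T) = (\<Sum>T\<in>R \<inter> {[]}. g T) + (\<Sum>T\<in>R - {[]}. g T)"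
    using fin by (subst split) (rule sum.union_disjoint, auto)
  moreover have "(\<Sum>T\<in>R \<inter> {[]}. g T) = (if [] \<in> R then g [] else 0)" by auto
  moreover have "(\<Sum>T\<in>R - {[]}. g T) = (\<Sum>C\<in>N. \<Sum>L\<in>Cons C -` R. g (C#L))"
  proof -
    have bij: "bij_betw (\<lambda>(C,L). C#L) (Sigma N (\<lambda>C. Cons C -` R)) (R - {[]})"
    proof (rule bij_betw_imageI)
      show "inj_on (\<lambda>(C,L). C#L) (Sigma N (\<lambda>C. Cons C -` R))" by (rule inj_onI) auto
      show "(\<lambda>(C,L). C#L) ` (Sigma N (\<lambda>C. Cons C -` R)) = R - {[]}"
      proof safe
        fix T assume "T \<in> R" "T \<notin> (\<lambda>(C,L). C#L) ` (Sigma N (\<lambda>C. Cons C -` R))"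
        then show "T = []" using hd by (cases T) force+
      qed
    qed
    have fs: "finite (Cons C -` R)" for C using fin by (rule finite_vimageI) simp
    have "(\<Sum>T\<in>R - {[]}. g T) = (\<Sum>p\<in>Sigma N (\<lambda>C. Cons C -` R). g ((\<lambda>(C,L). C#L) p))"
      by (rule sum.reindex_bij_betw[OF bij, symmetric])
    also have "\<dots> = (\<Sum>C\<in>N. \<Sum>L\<in>Cons C -` R. g (C#L))"
      by (subst sum.Sigma[OF finN]) (auto simp: fs split_def)
    finally show ?thesis .
  qed
  ultimately show ?thesis by simp
qed

definition IS :: "nat set list \<Rightarrow> (nat \<times> nat) set" where
  "IS T = {(i,j). cell_exists T i j \<and> leg T i j \<noteq> {}}"

lemma leg_poly_IS: "leg_poly T y = (\<Prod>(i,j)\<in>IS T. 1 - y ^ card (leg T i j))"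
  by (simp add: leg_poly_def IS_def)

lemma finite_IS: "finite (IS T)"
proof -
  have "IS T \<subseteq> {..<Max (insert 0 (card ` set T))} \<times> {..<length T}"
  proof
    fix p assume p: "p \<in> IS T"
    obtain i j where pij: "p = (i,j)" by (cases p)
    from p have c: "j < length T" "i < card (T ! j)" unfolding pij by (auto simp: IS_def cell_exists_def)
    have m: "card (T ! j) \<le> Max (insert 0 (card ` set T))" using c(1) by (intro Max_ge) auto
    show "p \<in> {..<Max (insert 0 (card ` set T))} \<times> {..<length T}" using c order_less_le_trans[OF c(2) m] pij by simp
  qed
  then show ?thesis by (rule finite_subset) auto
qed

lemma leg_poly_single: "leg_poly [C] y = 1"
proof -
  have "IS [C] = {}" by (auto simp: IS_def leg_def cell_exists_def)
  then show ?thesis by (simp add: leg_poly_IS)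
qed

lemma leg_poly_Nil: "leg_poly [] y = 1"
proof -
  have "IS [] = {}" by (auto simp: IS_def leg_def cell_exists_def)
  then show ?thesis by (simp add: leg_poly_IS)
qed

lemma leg_poly_cons2: "leg_poly (C#D#L) y = leg_poly [C,D] y * leg_poly (D#L) y"
proof -
  have leg0: "leg (C#D#L) i 0 = leg [C,D] i 0" for i by (simp add: leg_def cell_exists_def entry_def)
  have cell0: "cell_exists (C#D#L) i 0 = cell_exists [C,D] i 0" for i by (simp add: cell_exists_def)
  have legS: "leg [C,D] i (Suc j) = {}" for i j by (simp add: leg_def cell_exists_def)
  have IS_eq: "IS (C#D#L) = IS [C,D] \<union> (\<lambda>(i,j). (i, Suc j)) ` IS (D#L)"
  proof (rule set_eqI)
    fix p :: "nat \<times> nat"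
    obtain i j where p: "p = (i,j)" by (cases p)
    show "p \<in> IS (C#D#L) \<longleftrightarrow> p \<in> IS [C,D] \<union> (\<lambda>(i,j). (i, Suc j)) ` IS (D#L)"
    proof (cases j)
      case 0 then show ?thesis unfolding p using leg0 cell0 by (auto simp: IS_def)
    next
      case (Suc j') then show ?thesis unfolding p using legS by (auto simp: IS_def)
    qed
  qed
  have disj: "IS [C,D] \<inter> (\<lambda>(i,j). (i, Suc j)) ` IS (D#L) = {}"
    using legS by (auto simp: IS_def)
  have inj: "inj_on (\<lambda>(i,j). (i, Suc j)) (IS (D#L))" by (rule inj_onI) auto
  have "leg_poly (C#D#L) y = (\<Prod>(i,j)\<in>IS [C,D]. 1 - y ^ card (leg (C#D#L) i j))
      * (\<Prod>(i,j)\<in>(\<lambda>(i,j). (i, Suc j)) ` IS (D#L). 1 - y ^ card (leg (C#D#L) i j))"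
    unfolding leg_poly_IS IS_eq by (rule prod.union_disjoint) (use finite_IS disj in auto)
  also have "(\<Prod>(i,j)\<in>IS [C,D]. 1 - y ^ card (leg (C#D#L) i j)) = leg_poly [C,D] y"
    unfolding leg_poly_IS
  proof (rule prod.cong[OF refl], clarify)
    fix i j assume "(i,j) \<in> IS [C,D]"
    then have "j = 0" using legS by (cases j) (auto simp: IS_def)
    then show "1 - y ^ card (leg (C#D#L) i j) = 1 - y ^ card (leg [C,D] i j)" using leg0 by simp
  qed
  also have "(\<Prod>(i,j)\<in>(\<lambda>(i,j). (i, Suc j)) ` IS (D#L). 1 - y ^ card (leg (C#D#L) i j)) = leg_poly (D#L) y"
    unfolding leg_poly_IS by (subst prod.reindex[OF inj]) (simp add: split_def comp_def)
  finally show ?thesis .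
qed

definition NN :: "nat \<Rightarrow> nat set set" where "NN n = {C. C \<noteq> {} \<and> C \<subseteq> {1..n}}"
definition SS :: "nat \<Rightarrow> 'a::field \<Rightarrow> nat set \<Rightarrow> 'a" where "SS n y E = (-1)^card E * y^rho n E"
definition AA :: "'a::comm_ring_1 \<Rightarrow> nat set \<Rightarrow> nat set \<Rightarrow> 'a" where
  "AA y C D = (if rel C D then leg_poly [C,D] y else 0)"
definition KK :: "nat \<Rightarrow> 'a::field \<Rightarrow> (nat set \<Rightarrow> 'a) \<Rightarrow> nat set \<Rightarrow> 'a" where
  "KK n y t C = (\<Sum>L\<in>Cons C -` rSSYT n. leg_poly (C#L) y * prod_list (map t L))"

lemma finite_NN: "finite (NN n)" unfolding NN_def by (rule finite_subset[of _ "Pow {1..n}"]) auto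

lemma Pow_NN: "Pow {1..n} = insert {} (NN n)" "{} \<notin> NN n" unfolding NN_def by auto

lemma leg_poly_diag: "C \<subseteq> {1..n} \<Longrightarrow> leg_poly [C,C] y = 1"
  by (subst leg_path[of C n C]) (auto simp: wtp_def)

lemma leg_poly_top: "C \<subseteq> {1..n} \<Longrightarrow> rel C {} \<and> leg_poly [C,{}] y = 1"
  by (subst leg_path[of C n "{}"]) (auto simp: wtp_def rel_def)

lemma ff_full_set: "k \<le> n \<Longrightarrow> ff {1..n} k = k"
  unfolding ff_def by (simp add: Int_absorb2)

lemma rel_bot:
  fixes y :: "'a::comm_ring_1"
  assumes D: "D \<subseteq> {1..n}"
  shows "rel {1..n} D \<and> leg_poly [{1..n},D] y = 1"
proof -
  have r: "rel {1..n} D"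
    unfolding rel_iff[OF order_refl D] unfolding ff_def
    by (intro allI impI card_mono) (use D in auto)
  have e: "{k\<in>{1..n}. k \<in> D \<and> k \<notin> {1..n}} = {}" by auto
  have w: "wtp n y {1..n} D = 1" unfolding wtp_def e by simp
  have "leg_poly [{1..n},D] y = wtp n y {1..n} D" by (rule leg_path[OF order_refl D r])
  then show ?thesis using r w by simp
qed

lemma local_id:
  fixes y :: "'a::field"
  assumes y: "y \<noteq> 0" and C: "C \<subseteq> {1..n}" and E: "E \<subseteq> {1..n}"
  shows "(\<Sum>D\<in>Pow {1..n}. AA (inverse y) C D * SS n y D * AA y D E) = (if C = E then SS n y C else 0)"
proof -
  have t: "AA (inverse y) C D * SS n y D * AA y D E
      = (if rel C E then (if cond n C E D then trm n y C E D else 0) else 0)" if D: "D \<in> Pow {1..n}" for D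
  proof -
    have D': "D \<subseteq> {1..n}" using D by simp
    have cc: "cond n C E D \<longleftrightarrow> rel C D \<and> rel D E"
      unfolding cond_def rel_iff[OF C D'] rel_iff[OF D' E] by auto
    show ?thesis
    proof (cases "rel C D \<and> rel D E")
      case True
      then have "rel C E" using rel_trans by blast
      then show ?thesis using True cc leg_path[OF C D', of "inverse y"] leg_path[OF D' E, of y]
        by (simp add: AA_def trm_def SS_def)
    next
      case False then show ?thesis using cc by (auto simp: AA_def)
    qed
  qed
  have "(\<Sum>D\<in>Pow {1..n}. AA (inverse y) C D * SS n y D * AA y D E)
     = (\<Sum>D\<in>Pow {1..n}. if rel C E then (if cond n C E D then trm n y C E D else 0) else 0)"
    by (rule sum.cong[OF refl]) (rule t)
  also have "\<dots> = (if rel C E then Zs n y C E else 0)"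
    unfolding Zs_def by simp
  also have "\<dots> = (if C = E then SS n y C else 0)"
  proof (cases "C = E")
    case True
    have "stp y C C k = 1" for k by (simp add: stp_def)
    then show ?thesis using True Zs_formula[OF y, of n C C] ff_full[OF C, of n] by (simp add: SS_def)
  next
    case False
    show ?thesis
    proof (cases "rel C E")
      case True
      then show ?thesis using False Zs_zero[OF y C E] rel_iff[OF C E] by auto
    qed (use False in auto)
  qed
  finally show ?thesis .
qed

lemma K_rec:
  assumes C: "C \<in> NN n"
  shows "KK n y t C = 1 + (\<Sum>D\<in>NN n. if rel C D \<and> C \<noteq> D then leg_poly [C,D] y * t D * KK n y t D else 0)"
proof -
  let ?R = "Cons C -` rSSYT n"
  define g where "g L = leg_poly (C#L) y * prod_list (map t L)" for L
  have C': "C \<noteq> {}" "C \<subseteq> {1..n}" using C by (auto simp: NN_def)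
  have hd: "D \<in> NN n" if "D#L \<in> ?R" for D L
  proof -
    from that have "C#D#L \<in> rSSYT n" by simp
    then have "D#L \<in> rSSYT n" using rSSYT_cons2[of C D L n] by simp
    then have "is_ssyt n (D#L)" by (simp add: rSSYT_def)
    from ssyt_sets[OF this, of D] show ?thesis by (simp add: NN_def)
  qed
  have finR: "finite ?R" by (rule finite_vimageI[OF finite_rSSYT]) (simp add: inj_on_def)
  have single: "[C] \<in> rSSYT n" using rSSYT_single[of C n] C' by simp
  then have nil: "[] \<in> ?R" by simp
  have vim: "Cons D -` ?R = (if rel C D \<and> C \<noteq> D then Cons D -` rSSYT n else {})" for D
  proof (rule set_eqI)
    fix L
    have "L \<in> Cons D -` ?R \<longleftrightarrow> C#D#L \<in> rSSYT n" by simp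
    also have "\<dots> \<longleftrightarrow> rel C D \<and> C \<noteq> D \<and> D#L \<in> rSSYT n" using rSSYT_cons2[of C D L n] C' by simp
    finally show "L \<in> Cons D -` ?R \<longleftrightarrow> L \<in> (if rel C D \<and> C \<noteq> D then Cons D -` rSSYT n else {})"
      by simp
  qed
  have "KK n y t C = (if [] \<in> ?R then g [] else 0) + (\<Sum>D\<in>NN n. \<Sum>L\<in>Cons D -` ?R. g (D#L))"
    unfolding KK_def g_def by (rule sum_cons_split[OF finR finite_NN hd])
  also have "(if [] \<in> ?R then g [] else 0) = 1" using nil by (simp add: g_def leg_poly_single)
  also have "(\<Sum>D\<in>NN n. \<Sum>L\<in>Cons D -` ?R. g (D#L))
     = (\<Sum>D\<in>NN n. if rel C D \<and> C \<noteq> D then leg_poly [C,D] y * t D * KK n y t D else 0)"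
  proof (rule sum.cong[OF refl])
    fix D
    show "(\<Sum>L\<in>Cons D -` ?R. g (D#L)) = (if rel C D \<and> C \<noteq> D then leg_poly [C,D] y * t D * KK n y t D else 0)"
    proof (cases "rel C D \<and> C \<noteq> D")
      case True
      have "(\<Sum>L\<in>Cons D -` ?R. g (D#L)) = (\<Sum>L\<in>Cons D -` rSSYT n. g (D#L))"
        by (simp only: vim if_P[OF True])
      also have "\<dots> = (\<Sum>L\<in>Cons D -` rSSYT n. leg_poly [C,D] y * t D * (leg_poly (D#L) y * prod_list (map t L)))"
      proof (rule sum.cong[OF refl])
        fix L
        show "g (D#L) = leg_poly [C,D] y * t D * (leg_poly (D#L) y * prod_list (map t L))"
          unfolding g_def leg_poly_cons2[of C D L y] by (simp add: mult_ac)
      qed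
      also have "\<dots> = leg_poly [C,D] y * t D * KK n y t D"
        unfolding KK_def by (rule sum_distrib_left[symmetric])
      finally show ?thesis by (simp only: if_P[OF True])
    next
      case False
      show ?thesis by (simp only: vim if_not_P[OF False] sum.empty)
    qed
  qed
  finally show ?thesis .
qed

lemma HLS_K:
  fixes x :: "nat set \<Rightarrow> 'a::field"
  shows "HLS n y x = 1 + (\<Sum>C\<in>NN n. (x C / (1 - x C)) * KK n y (\<lambda>C. x C / (1 - x C)) C)"
proof -
  define t where "t = (\<lambda>C. x C / (1 - x C))"
  define g where "g T = leg_poly T y * prod_list (map t T)" for T
  have hd: "C \<in> NN n" if "C#L \<in> rSSYT n" for C L
  proof -
    have "is_ssyt n (C#L)" using that by (simp add: rSSYT_def)
    from ssyt_sets[OF this, of C] show ?thesis by (simp add: NN_def)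
  qed
  have "HLS n y x = (\<Sum>T\<in>rSSYT n. g T)" unfolding HLS_def g_def t_def ..
  also have "\<dots> = (if [] \<in> rSSYT n then g [] else 0) + (\<Sum>C\<in>NN n. \<Sum>L\<in>Cons C -` rSSYT n. g (C#L))"
    by (rule sum_cons_split[OF finite_rSSYT finite_NN hd])
  also have "(if [] \<in> rSSYT n then g [] else 0) = 1"
    using rSSYT_Nil[of n] by (simp add: g_def leg_poly_Nil)
  also have "(\<Sum>C\<in>NN n. \<Sum>L\<in>Cons C -` rSSYT n. g (C#L)) = (\<Sum>C\<in>NN n. t C * KK n y t C)"
  proof (rule sum.cong[OF refl])
    fix C
    have "(\<Sum>L\<in>Cons C -` rSSYT n. g (C#L)) = (\<Sum>L\<in>Cons C -` rSSYT n. t C * (leg_poly (C#L) y * prod_list (map t L)))"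
      by (rule sum.cong[OF refl]) (simp add: g_def mult_ac)
    also have "\<dots> = t C * KK n y t C" unfolding KK_def by (rule sum_distrib_left[symmetric])
    finally show "(\<Sum>L\<in>Cons C -` rSSYT n. g (C#L)) = t C * KK n y t C" .
  qed
  finally show ?thesis unfolding t_def .
qed

lemma uniq:
  fixes F G :: "nat set \<Rightarrow> 'a::field"
  assumes F: "\<And>C. C \<in> NN n \<Longrightarrow> F C = 1 + (\<Sum>D\<in>NN n. if rel C D \<and> C \<noteq> D then M C D * F D else 0)"
      and G: "\<And>C. C \<in> NN n \<Longrightarrow> G C = 1 + (\<Sum>D\<in>NN n. if rel C D \<and> C \<noteq> D then M C D * G D else 0)"
  shows "C \<in> NN n \<Longrightarrow> F C = G C"
proof (induction "card {D\<in>NN n. rel C D \<and> C \<noteq> D}" arbitrary: C rule: less_induct)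
  case less
  have finC: "finite C" using less.prems by (auto simp: NN_def intro: finite_subset)
  have eq: "F D = G D" if D: "D \<in> NN n" "rel C D" "C \<noteq> D" for D
  proof (rule less.hyps[OF _ D(1)])
    have finD: "finite D" using D by (auto simp: NN_def intro: finite_subset)
    have "{E\<in>NN n. rel D E \<and> D \<noteq> E} \<subset> {E\<in>NN n. rel C E \<and> C \<noteq> E}"
    proof
      show "{E\<in>NN n. rel D E \<and> D \<noteq> E} \<subseteq> {E\<in>NN n. rel C E \<and> C \<noteq> E}"
        using D rel_trans rel_antisym[OF finC finD] by blast
      show "{E\<in>NN n. rel D E \<and> D \<noteq> E} \<noteq> {E\<in>NN n. rel C E \<and> C \<noteq> E}" using D by blast
    qed
    then show "card {E\<in>NN n. rel D E \<and> D \<noteq> E} < card {E\<in>NN n. rel C E \<and> C \<noteq> E}"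
      by (rule psubset_card_mono[rotated]) (simp add: finite_NN)
  qed
  have "(\<Sum>D\<in>NN n. if rel C D \<and> C \<noteq> D then M C D * F D else 0)
      = (\<Sum>D\<in>NN n. if rel C D \<and> C \<noteq> D then M C D * G D else 0)"
    by (rule sum.cong[OF refl]) (simp add: eq)
  then show ?case using F[OF less.prems] G[OF less.prems] by simp
qed

lemma sum_lt_choose2: "(\<Sum>k<n. k) = n choose 2"
proof (induction n)
  case 0 then show ?case by simp
next
  case (Suc n)
  have "(Suc n choose 2) = (n choose 1) + (n choose 2)" by (simp add: numeral_2_eq_2)
  then show ?case using Suc by simp
qed

lemma rho_empty: "rho n {} = n choose 2"
proof -
  have "ff {} k = 0" for k by (simp add: ff_def)
  then show ?thesis by (simp add: rho_def sum_lt_choose2)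
qed

lemma rho_full: "rho n {1..n} = 0"
proof -
  have "\<forall>k\<in>{..<n}. k - ff {1..n} k = 0" using ff_full_set by simp
  then show ?thesis unfolding rho_def by simp
qed

lemma HLS_top:
  fixes x :: "nat set \<Rightarrow> 'a::field"
  assumes n: "n \<ge> 1"
  shows "HLS n y x = (1 + x {1..n} / (1 - x {1..n})) * KK n y (\<lambda>C. x C / (1 - x C)) {1..n}"
proof -
  define t where "t = (\<lambda>C. x C / (1 - x C))"
  define K where "K = KK n y t"
  define top where "top = {1..n}"
  have topN: "top \<in> NN n" using n by (auto simp: NN_def top_def)
  have "K top = 1 + (\<Sum>D\<in>NN n. if rel top D \<and> top \<noteq> D then leg_poly [top,D] y * t D * K D else 0)"
    unfolding K_def by (rule K_rec[OF topN])
  also have "(\<Sum>D\<in>NN n. if rel top D \<and> top \<noteq> D then leg_poly [top,D] y * t D * K D else 0)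
      = (\<Sum>D\<in>NN n. if D = top then 0 else t D * K D)"
  proof (rule sum.cong[OF refl])
    fix D assume "D \<in> NN n"
    then have D: "D \<subseteq> {1..n}" by (simp add: NN_def)
    show "(if rel top D \<and> top \<noteq> D then leg_poly [top,D] y * t D * K D else 0) = (if D = top then 0 else t D * K D)"
    proof (cases "D = top")
      case True then show ?thesis by simp
    next
      case False
      have "rel top D" "leg_poly [top,D] y = 1" using rel_bot[OF D, of y] unfolding top_def by auto
      then show ?thesis using False by simp
    qed
  qed
  also have "\<dots> = (\<Sum>D\<in>NN n - {top}. t D * K D)"
  proof -
    have "(\<Sum>D\<in>NN n. if D = top then 0 else t D * K D) = (if top = top then 0 else t top * K top) + (\<Sum>D\<in>NN n - {top}. if D = top then 0 else t D * K D)"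
      by (rule sum.remove[OF finite_NN topN])
    also have "\<dots> = (\<Sum>D\<in>NN n - {top}. t D * K D)" by (simp only: if_P[OF refl] add_0_left, rule sum.cong, auto)
    finally show ?thesis .
  qed
  also have "\<dots> = (\<Sum>D\<in>NN n. t D * K D) - t top * K top"
    using sum.remove[OF finite_NN topN, of "\<lambda>D. t D * K D"] by simp
  finally have Kt: "K top = 1 + ((\<Sum>D\<in>NN n. t D * K D) - t top * K top)" .
  have "HLS n y x = 1 + (\<Sum>D\<in>NN n. t D * K D)" unfolding t_def K_def by (rule HLS_K)
  also have "\<dots> = (1 + t top) * K top" using Kt by (simp add: algebra_simps)
  finally show ?thesis unfolding t_def K_def top_def .
qed

lemma AA_diag: "C \<subseteq> {1..n} \<Longrightarrow> AA y C C = 1"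
  by (simp add: AA_def leg_poly_diag)

lemma AA_split:
  assumes "C \<subseteq> {1..n}"
  shows "AA y C D * f D = (if D = C then f C else 0) + (if rel C D \<and> C \<noteq> D then leg_poly [C,D] y * f D else 0)"
  using AA_diag[OF assms, of y] by (auto simp: AA_def)

theorem theoremA:
  fixes n :: nat and y :: "'a::field_char_0" and x :: "nat set \<Rightarrow> 'a"
  assumes "n \<ge> 1"
    and "y \<noteq> 0"
    and "\<And>C. C \<noteq> {} \<Longrightarrow> C \<subseteq> {1..n} \<Longrightarrow> x C \<noteq> 0 \<and> x C \<noteq> 1"
  shows "HLS n (inverse y) (\<lambda>C. inverse (x C)) =
         (-1) ^ n * inverse y ^ (n choose 2) * x {1..n} * HLS n y x"
proof -
  note n = assms(1) and y = assms(2) and xC = assms(3)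
  define t where "t = (\<lambda>C. x C / (1 - x C))"
  define t' where "t' = (\<lambda>C. inverse (x C) / (1 - inverse (x C)))"
  define y' where "y' = inverse y"
  define K where "K = KK n y t"
  define K' where "K' = KK n y' t'"
  define R where "R = n choose 2"
  define c where "c = - inverse (y^R)"
  define F where "F C = c * SS n y C * K C" for C
  have tt: "t' C = -1 - t C" if "C \<in> NN n" for C
  proof -
    have "x C \<noteq> 0" "x C \<noteq> 1" using xC that by (auto simp: NN_def)
    then show ?thesis unfolding t_def t'_def by (simp add: field_simps)
  qed
  have NNsub: "C \<subseteq> {1..n}" if "C \<in> NN n" for C using that by (simp add: NN_def)
  have SSe: "SS n y {} = y^R" by (simp add: SS_def rho_empty R_def)
  have cy: "c * y^R = -1" using y by (simp add: c_def)
  have L1: "(\<Sum>D\<in>NN n. AA y' C D * SS n y D) = - (y^R)" if C: "C \<in> NN n" for C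
  proof -
    have Cne: "C \<noteq> {}" using C by (simp add: NN_def)
    have "0 = (\<Sum>D\<in>Pow {1..n}. AA y' C D * SS n y D * AA y D {})"
      using local_id[OF y NNsub[OF C], of "{}"] Cne by (simp add: y'_def)
    also have "\<dots> = AA y' C {} * SS n y {} * AA y {} {} + (\<Sum>D\<in>NN n. AA y' C D * SS n y D * AA y D {})"
      unfolding Pow_NN(1) by (rule sum.insert[OF finite_NN Pow_NN(2)])
    also have "AA y' C {} = 1" using leg_poly_top[OF NNsub[OF C], of y'] by (simp add: AA_def)
    also have "AA y {} {} = 1" by (simp add: AA_def leg_poly_top[of "{}" n])
    also have "(\<Sum>D\<in>NN n. AA y' C D * SS n y D * AA y D {}) = (\<Sum>D\<in>NN n. AA y' C D * SS n y D)"
    proof (rule sum.cong[OF refl])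
      fix D assume "D \<in> NN n"
      then have "AA y D {} = 1" using leg_poly_top[OF NNsub, of D y] by (simp add: AA_def)
      then show "AA y' C D * SS n y D * AA y D {} = AA y' C D * SS n y D" by simp
    qed
    finally show ?thesis using SSe by (simp add: add_eq_0_iff)
  qed
  have L2: "(\<Sum>D\<in>NN n. AA y' C D * SS n y D * AA y D E) = (if C = E then SS n y C else 0)"
    if C: "C \<in> NN n" and E: "E \<in> NN n" for C E
  proof -
    have Ene: "E \<noteq> {}" "finite E" using E by (auto simp: NN_def intro: finite_subset)
    have "\<not> rel {} E" using Ene by (simp add: rel_def)
    then have A0: "AA y {} E = 0" by (simp add: AA_def)
    have "(if C = E then SS n y C else 0) = (\<Sum>D\<in>Pow {1..n}. AA y' C D * SS n y D * AA y D E)"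
      using local_id[OF y NNsub[OF C] NNsub[OF E]] by (simp add: y'_def)
    also have "\<dots> = AA y' C {} * SS n y {} * AA y {} E + (\<Sum>D\<in>NN n. AA y' C D * SS n y D * AA y D E)"
      unfolding Pow_NN(1) by (rule sum.insert[OF finite_NN Pow_NN(2)])
    finally show ?thesis using A0 by simp
  qed
  have KR: "(1 + t D) * K D = 1 + (\<Sum>E\<in>NN n. AA y D E * t E * K E)" if D: "D \<in> NN n" for D
  proof -
    have "(\<Sum>E\<in>NN n. AA y D E * t E * K E)
        = (\<Sum>E\<in>NN n. (if E = D then t D * K D else 0) + (if rel D E \<and> D \<noteq> E then leg_poly [D,E] y * t E * K E else 0))"
      by (rule sum.cong[OF refl]) (simp add: AA_split[OF NNsub[OF D], where y=y and f="\<lambda>E. t E * K E"] mult.assoc)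
    also have "\<dots> = t D * K D + (\<Sum>E\<in>NN n. if rel D E \<and> D \<noteq> E then leg_poly [D,E] y * t E * K E else 0)"
      by (simp add: sum.distrib D finite_NN)
    also have "\<dots> = t D * K D + (K D - 1)"
      using K_rec[OF D, of y t] unfolding K_def by simp
    finally show ?thesis by (simp add: algebra_simps)
  qed
  have key: "(\<Sum>D\<in>NN n. AA y' C D * ((1 + t D) * F D)) = 1 + t C * F C" if C: "C \<in> NN n" for C
  proof -
    have "(\<Sum>D\<in>NN n. AA y' C D * ((1 + t D) * F D))
        = (\<Sum>D\<in>NN n. c * (AA y' C D * SS n y D) * ((1 + t D) * K D))"
      by (rule sum.cong[OF refl]) (simp add: F_def mult_ac)
    also have "\<dots> = (\<Sum>D\<in>NN n. c * (AA y' C D * SS n y D) + (\<Sum>E\<in>NN n. c * (AA y' C D * SS n y D * AA y D E) * (t E * K E)))"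
    proof (rule sum.cong[OF refl])
      fix D assume D: "D \<in> NN n"
      show "c * (AA y' C D * SS n y D) * ((1 + t D) * K D) = c * (AA y' C D * SS n y D) + (\<Sum>E\<in>NN n. c * (AA y' C D * SS n y D * AA y D E) * (t E * K E))"
        unfolding KR[OF D] by (simp add: distrib_left sum_distrib_left mult_ac)
    qed
    also have "\<dots> = c * (\<Sum>D\<in>NN n. AA y' C D * SS n y D) + (\<Sum>E\<in>NN n. c * (\<Sum>D\<in>NN n. AA y' C D * SS n y D * AA y D E) * (t E * K E))"
    proof -
      have s1: "(\<Sum>D\<in>NN n. \<Sum>E\<in>NN n. c * (AA y' C D * SS n y D * AA y D E) * (t E * K E))
          = (\<Sum>E\<in>NN n. \<Sum>D\<in>NN n. c * (AA y' C D * SS n y D * AA y D E) * (t E * K E))"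
        by (rule sum.swap)
      have s2: "(\<Sum>D\<in>NN n. c * (AA y' C D * SS n y D * AA y D E) * (t E * K E))
          = c * (\<Sum>D\<in>NN n. AA y' C D * SS n y D * AA y D E) * (t E * K E)" for E
        by (simp add: sum_distrib_left sum_distrib_right)
      show ?thesis
        by (simp only: sum.distrib s1 s2 sum_distrib_left[symmetric])
    qed
    also have "\<dots> = c * (- (y^R)) + (\<Sum>E\<in>NN n. if E = C then c * SS n y C * (t C * K C) else 0)"
    proof -
      have "(\<Sum>E\<in>NN n. c * (\<Sum>D\<in>NN n. AA y' C D * SS n y D * AA y D E) * (t E * K E))
          = (\<Sum>E\<in>NN n. if E = C then c * SS n y C * (t C * K C) else 0)"
      proof (rule sum.cong[OF refl])
        fix E assume E: "E \<in> NN n"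
        show "c * (\<Sum>D\<in>NN n. AA y' C D * SS n y D * AA y D E) * (t E * K E) = (if E = C then c * SS n y C * (t C * K C) else 0)"
          unfolding L2[OF C E] by auto
      qed
      then show ?thesis unfolding L1[OF C] by simp
    qed
    also have "\<dots> = 1 + t C * F C" using C cy by (simp add: F_def finite_NN mult_ac)
    finally show ?thesis .
  qed
  have Frec: "F C = 1 + (\<Sum>D\<in>NN n. if rel C D \<and> C \<noteq> D then leg_poly [C,D] y' * t' D * F D else 0)"
    if C: "C \<in> NN n" for C
  proof -
    have "(\<Sum>D\<in>NN n. AA y' C D * (t' D * F D))
        = (\<Sum>D\<in>NN n. (if D = C then t' C * F C else 0) + (if rel C D \<and> C \<noteq> D then leg_poly [C,D] y' * t' D * F D else 0))"
      by (rule sum.cong[OF refl]) (simp add: AA_split[OF NNsub[OF C], where y=y' and f="\<lambda>D. t' D * F D"] mult.assoc)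
    also have "\<dots> = t' C * F C + (\<Sum>D\<in>NN n. if rel C D \<and> C \<noteq> D then leg_poly [C,D] y' * t' D * F D else 0)"
      by (simp add: sum.distrib C finite_NN)
    finally have e1: "(\<Sum>D\<in>NN n. if rel C D \<and> C \<noteq> D then leg_poly [C,D] y' * t' D * F D else 0)
        = (\<Sum>D\<in>NN n. AA y' C D * (t' D * F D)) - t' C * F C" by simp
    have "(\<Sum>D\<in>NN n. AA y' C D * (t' D * F D)) = - (\<Sum>D\<in>NN n. AA y' C D * ((1 + t D) * F D))"
    proof -
      have "(\<Sum>D\<in>NN n. AA y' C D * (t' D * F D)) = (\<Sum>D\<in>NN n. - (AA y' C D * ((1 + t D) * F D)))"
        by (rule sum.cong[OF refl]) (simp add: tt algebra_simps)
      also have "\<dots> = - (\<Sum>D\<in>NN n. AA y' C D * ((1 + t D) * F D))" by (rule sum_negf)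
      finally show ?thesis .
    qed
    then show ?thesis unfolding e1 key[OF C] tt[OF C] by (simp add: algebra_simps)
  qed
  have K'rec: "K' C = 1 + (\<Sum>D\<in>NN n. if rel C D \<and> C \<noteq> D then leg_poly [C,D] y' * t' D * K' D else 0)"
    if "C \<in> NN n" for C
    unfolding K'_def by (rule K_rec[OF that])
  have KF: "K' C = F C" if "C \<in> NN n" for C
    by (rule uniq[where M="\<lambda>C D. leg_poly [C,D] y' * t' D", OF K'rec Frec that])
  have topN: "{1..n} \<in> NN n" using n by (auto simp: NN_def)
  have SSt: "SS n y {1..n} = (-1)^n" unfolding SS_def rho_full by simp
  have x1: "x {1..n} \<noteq> 0" "x {1..n} \<noteq> 1" using xC[of "{1..n}"] n by auto
  have "HLS n (inverse y) (\<lambda>C. inverse (x C)) = (1 + t' {1..n}) * K' {1..n}"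
    using HLS_top[OF n, of "inverse y" "\<lambda>C. inverse (x C)"] unfolding t'_def K'_def y'_def by simp
  also have "\<dots> = (1 + t' {1..n}) * F {1..n}" using KF[OF topN] by simp
  also have "\<dots> = - t {1..n} * c * (-1)^n * K {1..n}"
    unfolding tt[OF topN] F_def SSt by (simp add: algebra_simps)
  also have "\<dots> = (-1) ^ n * inverse y ^ (n choose 2) * x {1..n} * ((1 + t {1..n}) * K {1..n})"
  proof -
    have h1: "1 + t {1..n} = inverse (1 - x {1..n})" using x1 unfolding t_def by (simp add: field_simps)
    have h2: "t {1..n} = x {1..n} * inverse (1 - x {1..n})" unfolding t_def by (simp add: divide_inverse)
    show ?thesis unfolding h1 unfolding h2 c_def R_def by (simp add: power_inverse mult_ac)
  qed
  also have "(1 + t {1..n}) * K {1..n} = HLS n y x"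
    using HLS_top[OF n, of y x] unfolding t_def K_def by simp
  finally show ?thesis .
qed

end
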